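(* Let $K$ be a number field and let ${\cal Z}_P\subset K^n$ be a finite set of points. Then the radical ideal of $K[x_1,\dots,x_n]$ associated with ${\cal Z}_P$ (the ideal of all polynomials vanishing on ${\cal Z}_P$) is generated by a set of polynomials of the form $$ \hat a_{i_1}\hat a_{i_2}\cdots\hat a_{i_s},\qquad (i_1,\dots,i_s)\in\Gamma_s,\quad s\in\{1,\dots,\bar n\}, $$ for some integer $\bar n>n$, some affine-linear polynomials $\hat a_1,\dots,\hat a_{\bar n}\in K[x_1,\dots,x_n]$ and some sets $\Gamma_s\subseteq\{(i_1,\dots,i_s)\in\{1,\dots,\bar n\}^s: i_1<i_2<\dots<i_s\}$.
   Context: An affine-linear polynomial is one of the form $a_{n+1}+\sum_{i=1}^n a_ix_i$ with coefficients in $K$. *)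

theory Defs
  imports Complex_Main "HOL-Library.Poly_Mapping"
begin

text \<open>Multivariate polynomials: finitely supported maps from monomials
(exponent vectors) to coefficients. Variable x_(i+1) of the
paper is indexed by i here (variables 0..n-1).\<close>

type_synonym 'a mpoly = "(nat \<Rightarrow>\<^sub>0 nat) \<Rightarrow>\<^sub>0 'a"

definition subfield_of_complex :: "complex set \<Rightarrow> bool" where
  "subfield_of_complex K \<longleftrightarrow> 0 \<in> K \<and> 1 \<in> K \<and>
     (\<forall>x\<in>K. \<forall>y\<in>K. x + y \<in> K \<and> x * y \<in> K \<and> x - y \<in> K) \<and>
     (\<forall>x\<in>K. inverse x \<in> K)"

text \<open>A number field, realised (as every number field can be) as a subfield of C
that is finite-dimensional as a vector space over Q.\<close>
definition number_field :: "complex set \<Rightarrow> bool" where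
  "number_field K \<longleftrightarrow> subfield_of_complex K \<and>
     (\<exists>B. finite B \<and> B \<subseteq> K \<and>
        K \<subseteq> {\<Sum>b\<in>B. of_rat (r b) * b | r. True})"

definition poly_ring :: "complex set \<Rightarrow> nat \<Rightarrow> complex mpoly set" where
  "poly_ring K n = {p :: complex mpoly. \<forall>m :: (nat, nat) poly_mapping. m \<in> Poly_Mapping.keys p \<longrightarrow> Poly_Mapping.lookup p m \<in> K \<and> Poly_Mapping.keys m \<subseteq> {..<n}}"

definition mpeval :: "complex mpoly \<Rightarrow> (nat \<Rightarrow> complex) \<Rightarrow> complex" where
  "mpeval p x = (\<Sum>m\<in>Poly_Mapping.keys p. Poly_Mapping.lookup p m * (\<Prod>i\<in>Poly_Mapping.keys m. x i ^ Poly_Mapping.lookup m i))"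

definition points :: "complex set \<Rightarrow> nat \<Rightarrow> (nat \<Rightarrow> complex) set" where
  "points K n = {z. (\<forall>i<n. z i \<in> K) \<and> (\<forall>i\<ge>n. z i = 0)}"

definition affine_linear :: "complex set \<Rightarrow> nat \<Rightarrow> complex mpoly \<Rightarrow> bool" where
  "affine_linear K n p \<longleftrightarrow> (\<exists>c a. c \<in> K \<and> (\<forall>i<n. a i \<in> K) \<and>
     p = Poly_Mapping.single 0 c +
         (\<Sum>i<n. Poly_Mapping.single (Poly_Mapping.single i 1) (a i)))"

definition vanishing_ideal :: "complex set \<Rightarrow> nat \<Rightarrow> (nat \<Rightarrow> complex) set \<Rightarrow> complex mpoly set" where
  "vanishing_ideal K n Z = {p \<in> poly_ring K n. \<forall>z\<in>Z. mpeval p z = 0}"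

definition ideal_gen :: "complex set \<Rightarrow> nat \<Rightarrow> complex mpoly set \<Rightarrow> complex mpoly set" where
  "ideal_gen K n G = {\<Sum>g\<in>F. q g * g | F q. finite F \<and> F \<subseteq> G \<and> (\<forall>g\<in>F. q g \<in> poly_ring K n)}"

end

theory Submission
  imports Defs
begin

abbreviation Cst :: "complex \<Rightarrow> complex mpoly" where "Cst c \<equiv> Poly_Mapping.single 0 c"
abbreviation Var :: "nat \<Rightarrow> complex mpoly" where "Var i \<equiv> Poly_Mapping.single (Poly_Mapping.single i 1) 1"

lemma pm_expand: "(\<Sum>m\<in>Poly_Mapping.keys p. Poly_Mapping.single m (Poly_Mapping.lookup p m)) = p"
proof (rule poly_mapping_eqI)
  fix k
  show "Poly_Mapping.lookup (\<Sum>m\<in>Poly_Mapping.keys p. Poly_Mapping.single m (Poly_Mapping.lookup p m)) k = Poly_Mapping.lookup p k"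
    by (simp add: lookup_sum lookup_single when_def in_keys_iff)
qed

definition mon :: "(nat \<Rightarrow> complex) \<Rightarrow> (nat \<Rightarrow>\<^sub>0 nat) \<Rightarrow> complex" where
  "mon x m = (\<Prod>i\<in>Poly_Mapping.keys m. x i ^ Poly_Mapping.lookup m i)"

lemma mon_superset: "finite S \<Longrightarrow> Poly_Mapping.keys m \<subseteq> S \<Longrightarrow> mon x m = (\<Prod>i\<in>S. x i ^ Poly_Mapping.lookup m i)"
  unfolding mon_def by (rule prod.mono_neutral_left) (auto simp: in_keys_iff)

lemma mon_add: "mon x (a + b) = mon x a * mon x b"
proof -
  let ?S = "Poly_Mapping.keys a \<union> Poly_Mapping.keys b"
  have "mon x (a+b) = (\<Prod>i\<in>?S. x i ^ Poly_Mapping.lookup (a+b) i)"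
    by (rule mon_superset) (use keys_add[of a b] in auto)
  also have "\<dots> = (\<Prod>i\<in>?S. x i ^ Poly_Mapping.lookup a i) * (\<Prod>i\<in>?S. x i ^ Poly_Mapping.lookup b i)"
    by (simp add: lookup_add power_add prod.distrib)
  also have "\<dots> = mon x a * mon x b" by (simp add: mon_superset[of ?S])
  finally show ?thesis .
qed

lemma mon_zero [simp]: "mon x 0 = 1" by (simp add: mon_def)

lemma mpeval_alt: "mpeval p x = (\<Sum>m\<in>Poly_Mapping.keys p. Poly_Mapping.lookup p m * mon x m)"
  by (simp add: mpeval_def mon_def)

lemma mpeval_superset: "finite S \<Longrightarrow> Poly_Mapping.keys p \<subseteq> S \<Longrightarrow> mpeval p x = (\<Sum>m\<in>S. Poly_Mapping.lookup p m * mon x m)"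
  unfolding mpeval_alt by (rule sum.mono_neutral_left) (auto simp: in_keys_iff)

lemma mpeval_add: "mpeval (p + q) x = mpeval p x + mpeval q x"
proof -
  let ?S = "Poly_Mapping.keys p \<union> Poly_Mapping.keys q"
  have "mpeval (p+q) x = (\<Sum>m\<in>?S. Poly_Mapping.lookup (p+q) m * mon x m)"
    by (rule mpeval_superset) (use keys_add[of p q] in auto)
  also have "\<dots> = mpeval p x + mpeval q x"
    by (simp add: lookup_add distrib_right sum.distrib mpeval_superset[of ?S])
  finally show ?thesis .
qed

lemma mpeval_zero [simp]: "mpeval 0 x = 0" by (simp add: mpeval_def)

lemma mpeval_uminus: "mpeval (- p) x = - mpeval p x"
  by (simp add: mpeval_alt sum_negf)

lemma mpeval_diff: "mpeval (p - q) x = mpeval p x - mpeval q x"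
  using mpeval_add[of p "-q" x] by (simp add: mpeval_uminus)

lemma mpeval_sum: "mpeval (sum f A) x = (\<Sum>a\<in>A. mpeval (f a) x)"
  by (induction A rule: infinite_finite_induct) (auto simp: mpeval_add)

lemma mpeval_single [simp]: "mpeval (Poly_Mapping.single m c) x = c * mon x m"
  by (simp add: mpeval_alt)

lemma pm_mult_expand: "(p::complex mpoly) * q = (\<Sum>m1\<in>Poly_Mapping.keys p. \<Sum>m2\<in>Poly_Mapping.keys q.
   Poly_Mapping.single (m1+m2) (Poly_Mapping.lookup p m1 * Poly_Mapping.lookup q m2))"
proof -
  have "p * q = (\<Sum>m1\<in>Poly_Mapping.keys p. Poly_Mapping.single m1 (Poly_Mapping.lookup p m1)) *
      (\<Sum>m2\<in>Poly_Mapping.keys q. Poly_Mapping.single m2 (Poly_Mapping.lookup q m2))"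
    by (simp add: pm_expand)
  also have "\<dots> = (\<Sum>m1\<in>Poly_Mapping.keys p. \<Sum>m2\<in>Poly_Mapping.keys q.
   Poly_Mapping.single m1 (Poly_Mapping.lookup p m1) * Poly_Mapping.single m2 (Poly_Mapping.lookup q m2))"
    by (rule sum_product)
  finally show ?thesis by (simp add: mult_single)
qed

lemma mpeval_mult: "mpeval (p * q) x = mpeval p x * mpeval q x"
proof -
  have "mpeval (p * q) x = (\<Sum>m1\<in>Poly_Mapping.keys p. \<Sum>m2\<in>Poly_Mapping.keys q.
     (Poly_Mapping.lookup p m1 * mon x m1) * (Poly_Mapping.lookup q m2 * mon x m2))"
    by (subst pm_mult_expand) (simp add: mpeval_sum mon_add mult_ac)
  also have "\<dots> = mpeval p x * mpeval q x" by (simp add: mpeval_alt sum_product)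
  finally show ?thesis .
qed

lemma mpeval_Cst [simp]: "mpeval (Cst c) x = c" by simp
lemma mpeval_Var [simp]: "mpeval (Var i) x = x i" by (simp add: mon_def)
lemma mon_Var' [simp]: "mon x (Poly_Mapping.single i (Suc 0)) = x i" by (simp add: mon_def)
lemma mpeval_Var' [simp]: "mpeval (Poly_Mapping.single (Poly_Mapping.single i (Suc 0)) 1) x = x i" by simp
lemma mpeval_one [simp]: "mpeval 1 x = 1"
  by (metis mpeval_Cst single_one)

lemma mpeval_prod_list: "mpeval (prod_list ps) x = prod_list (map (\<lambda>p. mpeval p x) ps)"
  by (induction ps) (auto simp: mpeval_mult)



locale sf = fixes K :: "complex set" and n :: nat assumes sf: "subfield_of_complex K"
begin

lemma K0: "0 \<in> K" and K1: "1 \<in> K" and Kadd: "x \<in> K \<Longrightarrow> y \<in> K \<Longrightarrow> x + y \<in> K"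
  and Kmult: "x \<in> K \<Longrightarrow> y \<in> K \<Longrightarrow> x * y \<in> K" and Kdiff: "x \<in> K \<Longrightarrow> y \<in> K \<Longrightarrow> x - y \<in> K"
  and Kinv: "x \<in> K \<Longrightarrow> inverse x \<in> K"
  using sf by (auto simp: subfield_of_complex_def)

lemma Kuminus: "x \<in> K \<Longrightarrow> - x \<in> K" using Kdiff[OF K0] by simp

abbreviation "R \<equiv> poly_ring K n"

lemma R_lookup: "p \<in> R \<Longrightarrow> Poly_Mapping.lookup p m \<in> K"
  by (cases "m \<in> Poly_Mapping.keys p") (auto simp: poly_ring_def in_keys_iff K0)

lemma R_keys: "p \<in> R \<Longrightarrow> m \<in> Poly_Mapping.keys p \<Longrightarrow> Poly_Mapping.keys m \<subseteq> {..<n}"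
  by (auto simp: poly_ring_def)

lemma R_add: "p \<in> R \<Longrightarrow> q \<in> R \<Longrightarrow> p + q \<in> R"
proof -
  assume p: "p \<in> R" and q: "q \<in> R"
  show ?thesis unfolding poly_ring_def
  proof (intro CollectI allI impI conjI)
    fix m assume "m \<in> Poly_Mapping.keys (p + q)"
    then have "m \<in> Poly_Mapping.keys p \<or> m \<in> Poly_Mapping.keys q" using keys_add[of p q] by blast
    then show "Poly_Mapping.keys m \<subseteq> {..<n}" using R_keys[OF p, of m] R_keys[OF q, of m] by blast
    show "Poly_Mapping.lookup (p + q) m \<in> K"
      unfolding lookup_add using R_lookup[OF p] R_lookup[OF q] by (rule Kadd)
  qed
qed

lemma R_diff: "p \<in> R \<Longrightarrow> q \<in> R \<Longrightarrow> p - q \<in> R"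
proof -
  assume p: "p \<in> R" and q: "q \<in> R"
  show ?thesis unfolding poly_ring_def
  proof (intro CollectI allI impI conjI)
    fix m assume "m \<in> Poly_Mapping.keys (p - q)"
    then have "m \<in> Poly_Mapping.keys p \<or> m \<in> Poly_Mapping.keys q" using keys_diff[of p q] by blast
    then show "Poly_Mapping.keys m \<subseteq> {..<n}" using R_keys[OF p, of m] R_keys[OF q, of m] by blast
    show "Poly_Mapping.lookup (p - q) m \<in> K"
      unfolding lookup_minus using R_lookup[OF p] R_lookup[OF q] by (rule Kdiff)
  qed
qed

lemma R_single: "c \<in> K \<Longrightarrow> Poly_Mapping.keys m \<subseteq> {..<n} \<Longrightarrow> Poly_Mapping.single m c \<in> R"
  by (auto simp: poly_ring_def)

lemma R_zero: "0 \<in> R" by (auto simp: poly_ring_def)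

lemma R_sum: "(\<And>a. a \<in> A \<Longrightarrow> f a \<in> R) \<Longrightarrow> sum f A \<in> R"
  by (induction A rule: infinite_finite_induct) (auto simp: R_zero R_add)

lemma R_mult: "p \<in> R \<Longrightarrow> q \<in> R \<Longrightarrow> p * q \<in> R"
proof -
  assume p: "p \<in> R" and q: "q \<in> R"
  have "(\<Sum>m1\<in>Poly_Mapping.keys p. \<Sum>m2\<in>Poly_Mapping.keys q.
   Poly_Mapping.single (m1+m2) (Poly_Mapping.lookup p m1 * Poly_Mapping.lookup q m2)) \<in> R"
  proof (intro R_sum R_single Kmult R_lookup p q)
    fix m1 m2 assume "m1 \<in> Poly_Mapping.keys p" "m2 \<in> Poly_Mapping.keys q"
    then have "Poly_Mapping.keys m1 \<subseteq> {..<n}" "Poly_Mapping.keys m2 \<subseteq> {..<n}" using R_keys p q by auto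
    then show "Poly_Mapping.keys (m1 + m2) \<subseteq> {..<n}" using keys_add[of m1 m2] by blast
  qed
  then show ?thesis by (subst pm_mult_expand)
qed

lemma R_Cst: "c \<in> K \<Longrightarrow> Cst c \<in> R" by (rule R_single) auto
lemma R_one: "1 \<in> R" using R_Cst[OF K1] by simp
lemma R_Var: "i < n \<Longrightarrow> Var i \<in> R" by (rule R_single) (auto simp: K1)

lemma R_Var' [simp]: "i < n \<Longrightarrow> Poly_Mapping.single (Poly_Mapping.single i (Suc 0)) 1 \<in> R" using R_Var by simp

lemma R_prod_list: "(\<And>p. p \<in> set ps \<Longrightarrow> p \<in> R) \<Longrightarrow> prod_list ps \<in> R"
  by (induction ps) (auto simp: R_one R_mult)

lemma R_induct:
  assumes "p \<in> R"
    and C: "\<And>c. c \<in> K \<Longrightarrow> P (Cst c)" and V: "\<And>i. i < n \<Longrightarrow> P (Var i)"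
    and A: "\<And>p q. P p \<Longrightarrow> P q \<Longrightarrow> P (p + q)" and M: "\<And>p q. P p \<Longrightarrow> P q \<Longrightarrow> P (p * q)"
  shows "P p"
proof -
  have P0: "P 0" using C[OF K0] by simp
  have Psum: "P (sum f A)" if "\<And>a. a \<in> A \<Longrightarrow> P (f a)" for f :: "'b \<Rightarrow> complex mpoly" and A
    using that by (induction A rule: infinite_finite_induct) (auto simp: P0 A)
  have Pprod: "P (prod f A)" if "\<And>a. a \<in> A \<Longrightarrow> P (f a)" for f :: "'b \<Rightarrow> complex mpoly" and A
    using that by (induction A rule: infinite_finite_induct) (auto simp: M C[OF K1, simplified])
  have Ppow: "P (q ^ k)" if "P q" for q k
    using that by (induction k) (auto simp: M C[OF K1, simplified])
  have pw: "Var i ^ k = Poly_Mapping.single (Poly_Mapping.single i k) 1" for i k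
    by (induction k) (simp_all add: mult_single flip: single_add)
  have pr: "(\<Prod>i\<in>A. Poly_Mapping.single (g i) (1::complex)) = Poly_Mapping.single (\<Sum>i\<in>A. g i) 1"
    for A and g :: "nat \<Rightarrow> nat \<Rightarrow>\<^sub>0 nat"
    by (induction A rule: infinite_finite_induct) (auto simp: mult_single)
  have mexp: "(\<Sum>i\<in>Poly_Mapping.keys m. Poly_Mapping.single i (Poly_Mapping.lookup m i)) = m" for m :: "nat \<Rightarrow>\<^sub>0 nat"
    by (rule pm_expand)
  have mono: "P (Poly_Mapping.single m c)" if "c \<in> K" "Poly_Mapping.keys m \<subseteq> {..<n}" for m c
  proof -
    have "Poly_Mapping.single m c = Cst c * (\<Prod>i\<in>Poly_Mapping.keys m. Var i ^ Poly_Mapping.lookup m i)"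
    proof -
      have "(\<Prod>i\<in>Poly_Mapping.keys m. Var i ^ Poly_Mapping.lookup m i)
          = (\<Prod>i\<in>Poly_Mapping.keys m. Poly_Mapping.single (Poly_Mapping.single i (Poly_Mapping.lookup m i)) 1)"
        by (rule prod.cong[OF refl]) (rule pw)
      also have "\<dots> = Poly_Mapping.single m 1" by (simp only: pr mexp)
      finally show ?thesis by (simp add: mult_single)
    qed
    also have "P \<dots>" using that by (intro M C Pprod Ppow V) auto
    finally show ?thesis .
  qed
  have "p = (\<Sum>m\<in>Poly_Mapping.keys p. Poly_Mapping.single m (Poly_Mapping.lookup p m))"
    by (simp add: pm_expand)
  also have "P \<dots>" using assms(1) by (intro Psum mono R_lookup R_keys)
  finally show ?thesis .
qed

end


context sf
begin

abbreviation "IG \<equiv> ideal_gen K n"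

lemma ig_intro: "finite F \<Longrightarrow> F \<subseteq> G \<Longrightarrow> \<forall>g\<in>F. q g \<in> R \<Longrightarrow> x = (\<Sum>g\<in>F. q g * g) \<Longrightarrow> x \<in> IG G"
  unfolding ideal_gen_def by blast

lemma ig_zero: "0 \<in> IG G"
  by (rule ig_intro[of "{}"]) auto

lemma ig_gen: "g \<in> G \<Longrightarrow> g \<in> IG G"
  by (rule ig_intro[of "{g}" _ "\<lambda>_. 1"]) (auto simp: R_one)

lemma ig_add: assumes "p \<in> IG G" "q \<in> IG G" shows "p + q \<in> IG G"
proof -
  obtain F1 q1 where 1: "p = (\<Sum>g\<in>F1. q1 g * g)" "finite F1" "F1 \<subseteq> G" "\<forall>g\<in>F1. q1 g \<in> R"
    using assms(1) unfolding ideal_gen_def by blast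
  obtain F2 q2 where 2: "q = (\<Sum>g\<in>F2. q2 g * g)" "finite F2" "F2 \<subseteq> G" "\<forall>g\<in>F2. q2 g \<in> R"
    using assms(2) unfolding ideal_gen_def by blast
  define r1 where "r1 g = (if g \<in> F1 then q1 g else 0)" for g
  define r2 where "r2 g = (if g \<in> F2 then q2 g else 0)" for g
  have e1: "(\<Sum>g\<in>F1 \<union> F2. r1 g * g) = p" unfolding 1(1)
    by (rule sum.mono_neutral_cong_right) (auto simp: 1 2 r1_def)
  have e2: "(\<Sum>g\<in>F1 \<union> F2. r2 g * g) = q" unfolding 2(1)
    by (rule sum.mono_neutral_cong_right) (auto simp: 1 2 r2_def)
  have "p + q = (\<Sum>g\<in>F1 \<union> F2. (r1 g + r2 g) * g)"
    by (simp add: e1[symmetric] e2[symmetric] distrib_right sum.distrib)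
  moreover have "\<forall>g\<in>F1 \<union> F2. r1 g + r2 g \<in> R"
    using 1 2 by (auto simp: r1_def r2_def R_add R_zero)
  ultimately show ?thesis using 1 2 by (intro ig_intro[of "F1 \<union> F2"]) auto
qed

lemma ig_mult: assumes "r \<in> R" "p \<in> IG G" shows "r * p \<in> IG G"
proof -
  obtain F1 q1 where 1: "p = (\<Sum>g\<in>F1. q1 g * g)" "finite F1" "F1 \<subseteq> G" "\<forall>g\<in>F1. q1 g \<in> R"
    using assms(2) unfolding ideal_gen_def by blast
  have "r * p = (\<Sum>g\<in>F1. (r * q1 g) * g)" by (simp add: 1 sum_distrib_left mult.assoc)
  moreover have "\<forall>g\<in>F1. r * q1 g \<in> R" using 1 assms(1) by (auto simp: R_mult)
  ultimately show ?thesis using 1 by (intro ig_intro[of F1]) auto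
qed

lemma ig_sum: "(\<And>a. a \<in> A \<Longrightarrow> f a \<in> IG G) \<Longrightarrow> sum f A \<in> IG G"
  by (induction A rule: infinite_finite_induct) (auto simp: ig_zero ig_add)

lemma ig_least:
  assumes "0 \<in> S" "\<And>p q. p \<in> S \<Longrightarrow> q \<in> S \<Longrightarrow> p + q \<in> S"
    "\<And>r p. r \<in> R \<Longrightarrow> p \<in> S \<Longrightarrow> r * p \<in> S" "G \<subseteq> S"
  shows "IG G \<subseteq> S"
proof
  fix p assume "p \<in> IG G"
  then obtain F1 q1 where 1: "p = (\<Sum>g\<in>F1. q1 g * g)" "finite F1" "F1 \<subseteq> G" "\<forall>g\<in>F1. q1 g \<in> R"
    unfolding ideal_gen_def by blast
  have "(\<Sum>g\<in>F1. q1 g * g) \<in> S" if "finite F1" "F1 \<subseteq> G" "\<forall>g\<in>F1. q1 g \<in> R" for F1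
    using that by (induction F1 rule: finite_induct) (use assms in auto)
  then show "p \<in> S" using 1 by blast
qed

lemma ig_mono: "G \<subseteq> IG H \<Longrightarrow> IG G \<subseteq> IG H"
  by (rule ig_least) (auto simp: ig_zero ig_add ig_mult)

lemma ig_R: "G \<subseteq> R \<Longrightarrow> IG G \<subseteq> R"
  by (rule ig_least) (auto simp: R_zero R_add R_mult)

lemma ig_prod:
  assumes "p \<in> IG G" "q \<in> IG H"
  shows "p * q \<in> IG {g * h | g h. g \<in> G \<and> h \<in> H}"
proof -
  obtain F1 q1 where 1: "p = (\<Sum>g\<in>F1. q1 g * g)" "finite F1" "F1 \<subseteq> G" "\<forall>g\<in>F1. q1 g \<in> R"
    using assms(1) unfolding ideal_gen_def by blast
  obtain F2 q2 where 2: "q = (\<Sum>g\<in>F2. q2 g * g)" "finite F2" "F2 \<subseteq> H" "\<forall>g\<in>F2. q2 g \<in> R"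
    using assms(2) unfolding ideal_gen_def by blast
  have "p * q = (\<Sum>g\<in>F1. \<Sum>h\<in>F2. (q1 g * q2 h) * (g * h))"
    by (simp add: 1(1) 2(1) sum_product mult_ac)
  also have "\<dots> \<in> IG {g * h | g h. g \<in> G \<and> h \<in> H}"
    using 1 2 by (intro ig_sum ig_mult[OF R_mult] ig_gen) blast+
  finally show ?thesis .
qed

lemma V_R: "vanishing_ideal K n Z \<subseteq> R" by (auto simp: vanishing_ideal_def)

lemma ig_V: "G \<subseteq> vanishing_ideal K n Z \<Longrightarrow> IG G \<subseteq> vanishing_ideal K n Z"
  by (rule ig_least) (auto simp: vanishing_ideal_def R_zero R_add R_mult mpeval_add mpeval_mult)

end


lemma split_one: "(p::'a::comm_ring_1) = p * u + (1 - u) * p"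
  by (simp add: algebra_simps)

context sf
begin

lemma points_K: "z \<in> points K n \<Longrightarrow> i < n \<Longrightarrow> z i \<in> K"
  by (auto simp: points_def)

lemma mpeval_K: assumes "p \<in> R" "z \<in> points K n" shows "mpeval p z \<in> K"
  using assms(1) by (rule R_induct) (auto simp: mpeval_add mpeval_mult Kadd Kmult points_K[OF assms(2)])

definition Jg :: "(nat \<Rightarrow> complex) \<Rightarrow> complex mpoly set" where
  "Jg z = {Var i - Cst (z i) | i. i < n}"

lemma Jg_R: "z \<in> points K n \<Longrightarrow> Jg z \<subseteq> R"
  by (auto simp: Jg_def intro!: R_diff R_Var R_Cst points_K)

lemma single_point:
  assumes "z \<in> points K n" "p \<in> R"
  shows "p - Cst (mpeval p z) \<in> IG (Jg z)"
proof -
  have "(p - Cst (mpeval p z) \<in> IG (Jg z) \<and> p \<in> R \<and> mpeval p z \<in> K)"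
    using assms(2)
  proof (rule R_induct)
    fix c assume "c \<in> K" then show "Cst c - Cst (mpeval (Cst c) z) \<in> IG (Jg z) \<and> Cst c \<in> R \<and> mpeval (Cst c) z \<in> K"
      by (simp add: ig_zero R_Cst)
  next
    fix i assume "i < n" then show "Var i - Cst (mpeval (Var i) z) \<in> IG (Jg z) \<and> Var i \<in> R \<and> mpeval (Var i) z \<in> K"
      using points_K[OF assms(1)] by (auto simp: R_Var Jg_def intro!: ig_gen)
  next
    fix p q assume p: "p - Cst (mpeval p z) \<in> IG (Jg z) \<and> p \<in> R \<and> mpeval p z \<in> K"
      and q: "q - Cst (mpeval q z) \<in> IG (Jg z) \<and> q \<in> R \<and> mpeval q z \<in> K"
    have "(p + q) - Cst (mpeval (p + q) z) = (p - Cst (mpeval p z)) + (q - Cst (mpeval q z))"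
      by (simp add: mpeval_add single_add)
    then have "(p + q) - Cst (mpeval (p + q) z) \<in> IG (Jg z)" using p q by (metis ig_add)
    then show "(p + q) - Cst (mpeval (p + q) z) \<in> IG (Jg z) \<and> p + q \<in> R \<and> mpeval (p + q) z \<in> K"
      using p q by (simp add: R_add mpeval_add Kadd)
  next
    fix p q assume p: "p - Cst (mpeval p z) \<in> IG (Jg z) \<and> p \<in> R \<and> mpeval p z \<in> K"
      and q: "q - Cst (mpeval q z) \<in> IG (Jg z) \<and> q \<in> R \<and> mpeval q z \<in> K"
    have "(p * q) - Cst (mpeval (p * q) z) = q * (p - Cst (mpeval p z)) + Cst (mpeval p z) * (q - Cst (mpeval q z))"
    proof -
      have cm: "Cst (a * b) = Cst a * Cst b" for a b by (simp add: mult_single)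
      show ?thesis by (simp add: mpeval_mult cm algebra_simps)
    qed
    then have "(p * q) - Cst (mpeval (p * q) z) \<in> IG (Jg z)" using p q by (metis ig_add ig_mult R_Cst)
    then show "(p * q) - Cst (mpeval (p * q) z) \<in> IG (Jg z) \<and> p * q \<in> R \<and> mpeval (p * q) z \<in> K"
      using p q by (simp add: R_mult mpeval_mult Kmult)
  qed
  then show ?thesis by simp
qed

definition gens :: "(nat \<Rightarrow> complex) list \<Rightarrow> complex mpoly set" where
  "gens zs = {prod_list (map (\<lambda>(z,i). Var i - Cst (z i)) (zip zs js)) | js. length js = length zs \<and> set js \<subseteq> {..<n}}"

lemma gens_Nil: "gens [] = {1}" by (auto simp: gens_def)

lemma gens_Cons: "gens (z # zs) = {g * h | g h. g \<in> Jg z \<and> h \<in> gens zs}"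
proof safe
  fix x assume "x \<in> gens (z # zs)"
  then obtain js where js: "x = prod_list (map (\<lambda>(z,i). Var i - Cst (z i)) (zip (z # zs) js))"
    "length js = Suc (length zs)" "set js \<subseteq> {..<n}" by (auto simp: gens_def)
  then obtain i js' where "js = i # js'" by (cases "js") auto
  with js show "\<exists>g h. x = g * h \<and> g \<in> Jg z \<and> h \<in> gens zs"
    by (auto simp: Jg_def gens_def)
next
  fix g h assume "g \<in> Jg z" "h \<in> gens zs"
  then obtain i js' where "i < n" "g = Var i - Cst (z i)" "h = prod_list (map (\<lambda>(z,i). Var i - Cst (z i)) (zip zs js'))"
    "length js' = length zs" "set js' \<subseteq> {..<n}" by (auto simp: Jg_def gens_def)
  then show "g * h \<in> gens (z # zs)" unfolding gens_def
    by (intro CollectI exI[of _ "i # js'"]) auto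
qed

lemma gens_R: "set zs \<subseteq> points K n \<Longrightarrow> gens zs \<subseteq> R"
  by (induction zs) (auto simp: gens_Nil gens_Cons R_one intro!: R_mult dest!: Jg_R)

lemma V_intro: "p \<in> R \<Longrightarrow> (\<And>z. z \<in> S \<Longrightarrow> mpeval p z = 0) \<Longrightarrow> p \<in> vanishing_ideal K n S"
  by (auto simp: vanishing_ideal_def)

lemma main:
  assumes "distinct zs" "set zs \<subseteq> points K n"
  shows "IG (gens zs) = vanishing_ideal K n (set zs)"
  using assms
proof (induction zs)
  case Nil
  have "IG {1} = R"
  proof
    show "IG {1} \<subseteq> R" by (rule ig_R) (auto simp: R_one)
    show "R \<subseteq> IG {1}" using ig_mult[OF _ ig_gen[of 1 "{1}"]] by auto
  qed
  then show ?case by (simp add: gens_Nil vanishing_ideal_def)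
next
  case (Cons z zs)
  have z: "z \<in> points K n" and zsP: "set zs \<subseteq> points K n" and zz: "z \<notin> set zs" and dz: "distinct zs"
    using Cons.prems by auto
  have IH: "IG (gens zs) = vanishing_ideal K n (set zs)" using Cons.IH dz zsP by blast
  show ?case
  proof
    show "IG (gens (z # zs)) \<subseteq> vanishing_ideal K n (set (z # zs))"
    proof (rule ig_V, safe)
      fix x assume "x \<in> gens (z # zs)"
      then obtain g h where gh: "x = g * h" "g \<in> Jg z" "h \<in> gens zs" by (auto simp: gens_Cons)
      have gR: "g \<in> R" using gh Jg_R[OF z] by auto
      have hV: "h \<in> vanishing_ideal K n (set zs)" using gh(3) IH ig_gen by blast
      have g0: "mpeval g z = 0" using gh(2) by (auto simp: Jg_def mpeval_diff)
      show "x \<in> vanishing_ideal K n (set (z # zs))"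
        using gR hV g0 unfolding gh(1) vanishing_ideal_def by (auto simp: R_mult mpeval_mult)
    qed
  next
    show "vanishing_ideal K n (set (z # zs)) \<subseteq> IG (gens (z # zs))"
    proof
      fix p assume pV: "p \<in> vanishing_ideal K n (set (z # zs))"
      have pR: "p \<in> R" using pV by (auto simp: vanishing_ideal_def)
      have "\<exists>i<n. w i \<noteq> z i" if "w \<in> set zs" for w
      proof (rule ccontr)
        assume "\<not> ?thesis"
        moreover have "w \<in> points K n" using that zsP by auto
        ultimately have "w = z" using z by (auto simp: points_def fun_eq_iff) (metis not_le)
        then show False using that zz by simp
      qed
      then obtain ch where ch: "\<And>w. w \<in> set zs \<Longrightarrow> ch w < n \<and> w (ch w) \<noteq> z (ch w)" by metis
      define h where "h = prod_list (map (\<lambda>(w,i). Var i - Cst (w i)) (zip zs (map ch zs)))"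
      have hzip: "map (\<lambda>(w,i). F w i) (zip xs (map f xs)) = map (\<lambda>w. F w (f w)) xs" for F xs and f :: "(nat \<Rightarrow> complex) \<Rightarrow> nat"
        by (induction xs) auto
      have hg: "h \<in> gens zs" unfolding gens_def h_def using ch by (intro CollectI exI[of _ "map ch zs"]) auto
      have hR: "h \<in> R" using hg gens_R[OF zsP] by blast
      define c where "c = mpeval h z"
      have "c = prod_list (map (\<lambda>w. z (ch w) - w (ch w)) zs)"
      proof -
        have "c = prod_list (map (\<lambda>p. mpeval p z) (map (\<lambda>w. Var (ch w) - Cst (w (ch w))) zs))"
          unfolding c_def h_def hzip[of "\<lambda>w i. Var i - Cst (w i)"] mpeval_prod_list ..
        then show ?thesis by (simp only: map_map o_def mpeval_diff mpeval_Var mpeval_Cst)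
      qed
      moreover have "\<forall>w\<in>set zs. z (ch w) - w (ch w) \<noteq> 0" using ch by (metis eq_iff_diff_eq_0)
      ultimately have c0: "c \<noteq> 0" by (auto simp: prod_list_zero_iff)
      have cK: "c \<in> K" unfolding c_def using mpeval_K[OF hR z] .
      define u where "u = Cst (inverse c) * h"
      have uI: "u \<in> IG (gens zs)" unfolding u_def using hg by (intro ig_mult R_Cst Kinv cK ig_gen)
      have uz: "mpeval u z = 1" using c0 unfolding u_def mpeval_mult mpeval_Cst c_def[symmetric] by simp
      have uR: "u \<in> R" using uI ig_R[OF gens_R[OF zsP]] by blast
      have vI: "1 - u \<in> IG (Jg z)"
      proof -
        have "mpeval (1 - u) z = 0" by (simp only: mpeval_diff mpeval_one uz diff_self)
        then show ?thesis using single_point[OF z R_diff[OF R_one uR]] by (simp only: single_zero diff_zero)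
      qed
      have pJ: "p \<in> IG (Jg z)"
      proof -
        have "mpeval p z = 0" using pV unfolding vanishing_ideal_def by simp
        then show ?thesis using single_point[OF z pR] by (simp only: single_zero diff_zero)
      qed
      have "p \<in> vanishing_ideal K n (set zs)" using pV unfolding vanishing_ideal_def by simp
      then have pG: "p \<in> IG (gens zs)" by (simp only: IH)
      have eqs: "{g * h | g h. g \<in> Jg z \<and> h \<in> gens zs} = gens (z # zs)" by (rule gens_Cons[symmetric])
      have "p = p * u + (1 - u) * p" by (rule split_one)
      also have "\<dots> \<in> IG (gens (z # zs))"
        using ig_prod[OF pJ uI] ig_prod[OF vI pG] unfolding eqs by (rule ig_add)
      finally show "p \<in> IG (gens (z # zs))" .
    qed
  qed
qed

end


context sf
begin

lemma affine_Var: assumes "i < n" "v \<in> K" shows "affine_linear K n (Var i - Cst v)"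
proof -
  have "(\<lambda>i'. Poly_Mapping.single (Poly_Mapping.single i' 1) (if i' = i then 1 else (0::complex)))
        = (\<lambda>i'. if i' = i then Var i else 0)" (is "?F = _") by (auto simp: fun_eq_iff)
  then have "(\<Sum>i'<n. ?F i') = (\<Sum>i'<n. if i' = i then Var i else 0)" by (rule arg_cong)
  also have "\<dots> = Var i" using assms(1) by simp
  finally have "(\<Sum>i'<n. Poly_Mapping.single (Poly_Mapping.single i' 1) (if i' = i then 1 else (0::complex))) = Var i" .
  moreover have "Poly_Mapping.single 0 (- v) = - Cst v" by (simp add: single_uminus)
  ultimately have "Var i - Cst v = Poly_Mapping.single 0 (- v) +
         (\<Sum>i'<n. Poly_Mapping.single (Poly_Mapping.single i' 1) (if i' = i then 1 else (0::complex)))"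
    by simp
  then show ?thesis unfolding affine_linear_def using assms K0 K1 Kuminus
    by (intro exI[of _ "- v"] exI[of _ "\<lambda>i'. if i' = i then 1 else (0::complex)"]) auto
qed

lemma affine_one: "affine_linear K n 1"
  unfolding affine_linear_def using K0 K1
  by (intro exI[of _ 1] exI[of _ "\<lambda>_. 0::complex"]) auto

lemma divmod_aux: "r < (n::nat) \<Longrightarrow> (t * n + r) div n = t \<and> (t * n + r) mod n = r"
  by auto

end

theorem lemma4:
  fixes K :: "complex set" and n :: nat and Z :: "(nat \<Rightarrow> complex) set"
  assumes "number_field K"
    and "finite Z"
    and "Z \<subseteq> points K n"
  shows "\<exists>nbar::nat. nbar > n \<and>
    (\<exists>a :: nat \<Rightarrow> complex mpoly. (\<forall>i\<in>{1..nbar}. affine_linear K n (a i)) \<and>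
      (\<exists>\<Gamma> :: nat \<Rightarrow> nat list set.
         (\<forall>s\<in>{1..nbar}. \<Gamma> s \<subseteq> {is. length is = s \<and> set is \<subseteq> {1..nbar} \<and> sorted_wrt (<) is}) \<and>
         vanishing_ideal K n Z =
           ideal_gen K n (\<Union>s\<in>{1..nbar}. (\<lambda>is. prod_list (map a is)) ` \<Gamma> s)))"
proof -
  interpret sf K n using assms(1) by (simp add: sf_def number_field_def)
  obtain zs where zs: "set zs = Z" "distinct zs" using finite_distinct_list[OF assms(2)] by blast
  define m where "m = length zs"
  define nbar where "nbar = m * n + m + n + 1"
  define a where "a k = (if 1 \<le> k \<and> k \<le> m * n then Var ((k - 1) mod n) - Cst ((zs ! ((k - 1) div n)) ((k - 1) mod n)) else 1)" for k
  define idx where "idx js = map (\<lambda>(j,i). j * n + i + 1) (zip [0..<m] js)" for js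
  define L where "L = {idx js | js. length js = m \<and> set js \<subseteq> {..<n}}"
  define \<Gamma> where "\<Gamma> s = (if m = 0 then (if s = 1 then {[nbar]} else {}) else (if s = m then L else {}))" for s
  have zsP: "set zs \<subseteq> points K n" using zs assms(3) by simp
  have nth_idx: "idx js ! t = t * n + js ! t + 1" if "t < m" "length js = m" for js t
    using that by (simp add: idx_def)
  have len_idx: "length (idx js) = m" if "length js = m" for js
    using that by (simp add: idx_def)
  have bound: "t * n + r + 1 \<le> m * n" if "t < m" "r < n" for t r
  proof -
    have "Suc t * n \<le> m * n" using that(1) by (intro mult_le_mono1) simp
    then show ?thesis using that(2) by simp
  qed
  have A: "\<forall>k\<in>{1..nbar}. affine_linear K n (a k)"
  proof
    fix k assume "k \<in> {1..nbar}"
    show "affine_linear K n (a k)"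
    proof (cases "1 \<le> k \<and> k \<le> m * n")
      case True
      then have npos: "n > 0" by (cases n) auto
      have i: "(k - 1) mod n < n" using npos by simp
      have "k - 1 < m * n" using True by arith
      then have "(k - 1) div n < m" using npos by (simp add: div_less_iff_less_mult)
      then have "zs ! ((k - 1) div n) \<in> points K n" using zsP m_def by auto
      then have vK: "(zs ! ((k - 1) div n)) ((k - 1) mod n) \<in> K" using i by (rule points_K)
      have "a k = Var ((k - 1) mod n) - Cst ((zs ! ((k - 1) div n)) ((k - 1) mod n))"
        using True by (simp add: a_def)
      then show ?thesis using affine_Var[OF i vK] by (simp only:)
    next
      case False
      then have "a k = 1" unfolding a_def by (rule if_not_P)
      then show ?thesis using affine_one by (simp only:)
    qed
  qed
  have C: "\<forall>s\<in>{1..nbar}. \<Gamma> s \<subseteq> {is. length is = s \<and> set is \<subseteq> {1..nbar} \<and> sorted_wrt (<) is}"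
  proof (intro ballI subsetI)
    fix s x assume s: "s \<in> {1..nbar}" and x: "x \<in> \<Gamma> s"
    show "x \<in> {is. length is = s \<and> set is \<subseteq> {1..nbar} \<and> sorted_wrt (<) is}"
    proof (cases "m = 0")
      case True
      then show ?thesis using x by (auto simp: \<Gamma>_def nbar_def split: if_splits)
    next
      case False
      then have sm: "s = m" and xL: "x \<in> L" using x by (auto simp: \<Gamma>_def split: if_splits)
      then obtain js where js: "x = idx js" "length js = m" "set js \<subseteq> {..<n}" by (auto simp: L_def)
      have jsn: "js ! t < n" if "t < m" for t using js that by (auto dest: nth_mem)
      have "set x \<subseteq> {1..nbar}"
      proof
        fix y assume "y \<in> set x"
        then obtain t where t: "t < m" "y = x ! t" using js len_idx by (auto simp: in_set_conv_nth)
        then have "y = t * n + js ! t + 1" using nth_idx js by simp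
        then show "y \<in> {1..nbar}" using bound[OF t(1) jsn[OF t(1)]] by (simp add: nbar_def)
      qed
      moreover have "sorted_wrt (<) x"
        unfolding sorted_wrt_iff_nth_less
      proof (intro allI impI)
        fix t1 t2 assume "t1 < t2" "t2 < length x"
        then have t: "t1 < t2" "t2 < m" using js len_idx by auto
        have "Suc t1 * n \<le> t2 * n" using t(1) by (intro mult_le_mono1) simp
        then show "x ! t1 < x ! t2" using t js nth_idx jsn[of t1] by simp
      qed
      ultimately show ?thesis using js len_idx sm by simp
    qed
  qed
  have listeq: "map a (idx js) = map (\<lambda>(z,i). Var i - Cst (z i)) (zip zs js)"
    if "length js = m" "set js \<subseteq> {..<n}" for js
  proof (rule nth_equalityI)
    show "length (map a (idx js)) = length (map (\<lambda>(z,i). Var i - Cst (z i)) (zip zs js))"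
      using that len_idx m_def by simp
    fix t assume "t < length (map a (idx js))"
    then have t: "t < m" using that len_idx by simp
    have r: "js ! t < n" using that t by (auto dest: nth_mem)
    have b: "t * n + js ! t + 1 \<le> m * n" by (rule bound[OF t r])
    have dm: "(t * n + js ! t) div n = t" "(t * n + js ! t) mod n = js ! t" using divmod_aux[OF r] by auto
    show "map a (idx js) ! t = map (\<lambda>(z,i). Var i - Cst (z i)) (zip zs js) ! t"
    proof -
      have 1: "map a (idx js) ! t = a (t * n + js ! t + 1)" using t that len_idx nth_idx by simp
      have 2: "a (t * n + js ! t + 1) = Var (js ! t) - Cst ((zs ! t) (js ! t))" using b dm by (simp add: a_def)
      have 3: "map (\<lambda>(z,i). Var i - Cst (z i)) (zip zs js) ! t = Var (js ! t) - Cst ((zs ! t) (js ! t))"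
        using t that m_def by simp
      show ?thesis unfolding 1 2 3 ..
    qed
  qed
  have U: "(\<Union>s\<in>{1..nbar}. (\<lambda>is. prod_list (map a is)) ` \<Gamma> s) = gens zs"
  proof (cases "m = 0")
    case True
    then have "zs = []" using m_def by simp
    moreover have "(\<Union>s\<in>{1..nbar}. (\<lambda>is. prod_list (map a is)) ` \<Gamma> s) = {a nbar}"
      using True by (auto simp: \<Gamma>_def nbar_def split: if_splits)
    moreover have "a nbar = 1" by (simp add: a_def nbar_def)
    ultimately show ?thesis by (simp add: gens_Nil)
  next
    case False
    have "(\<Union>s\<in>{1..nbar}. (\<lambda>is. prod_list (map a is)) ` \<Gamma> s) = (\<lambda>is. prod_list (map a is)) ` L"
      using False by (auto simp: \<Gamma>_def nbar_def split: if_splits)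
    also have "\<dots> = gens zs"
    proof
      show "(\<lambda>is. prod_list (map a is)) ` L \<subseteq> gens zs"
        using listeq m_def by (auto simp: L_def gens_def)
      show "gens zs \<subseteq> (\<lambda>is. prod_list (map a is)) ` L"
      proof
        fix x assume "x \<in> gens zs"
        then obtain js where js: "x = prod_list (map (\<lambda>(z,i). Var i - Cst (z i)) (zip zs js))"
          "length js = m" "set js \<subseteq> {..<n}" by (auto simp: gens_def m_def)
        then have "x = prod_list (map a (idx js))" using listeq by simp
        moreover have "idx js \<in> L" using js by (auto simp: L_def)
        ultimately show "x \<in> (\<lambda>is. prod_list (map a is)) ` L" by blast
      qed
    qed
    finally show ?thesis .
  qed
  have V: "vanishing_ideal K n Z = ideal_gen K n (gens zs)"
    using main[OF zs(2) zsP] zs(1) by simp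
  show ?thesis
    by (rule exI[of _ nbar], intro conjI, simp add: nbar_def, rule exI[of _ a], intro conjI, rule A,
        rule exI[of _ \<Gamma>], intro conjI, rule C, simp only: V U)
qed


end
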